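(* Let $c$ be a correct client following the client protocol described in the context, let $w$ be a \textsc{put} operation and $r$ a \textsc{get} operation issued by $c$, with $w$ issued before $r$. Then $\mathrm{ts}(r) \ge \mathrm{ts}(w)$.
   Context: Client model. A client $c$ has a physical clock whose reading $\mathsf{clock}_c$ is a positive real number that is strictly increasing in real time. The client keeps two variables, a dependency time $\mathsf{dt}_c$ and a common global stable time $\mathsf{cgst}_c$, both initially $0$; they are modified only as described below. A correct client issues its operations one at a time: an operation is issued only after the previous one has returned. Servers are grouped into partitions of $3f+1$ replicas each, and a quorum is a set of $2f+1$ replicas of one partition. \textsc{get}$(k)$: the client sets $ts \gets \max\{\mathsf{dt}_c, \mathsf{cgst}_c\}$ and sends a request carrying $ts$ to the replicas of the partition holding $k$. It then waits for replies from a quorum $Q$, each reply from replica $i\in Q$ carrying a value $v_i$ and a number $cgst_i$, sets $\mathsf{cgst}_c \gets \max\{\mathsf{cgst}_c, \min_{i\in Q} cgst_i\}$, and returns a value. \textsc{put}$(k,v)$: the client waits until $\mathsf{clock}_c > \mathsf{cgst}_c$, then sends a request carrying $(k, v, cl, c)$, where $cl$ is the current reading of $\mathsf{clock}_c$, to the replicas of the partition holding $k$. It then waits for replies from a quorum $Q$, each reply from $i\in Q$ carrying a number $cgst_i$, sets $\mathsf{cgst}_c \gets \max\{\mathsf{cgst}_c, \min_{i\in Q} cgst_i\}$, then sets $\mathsf{dt}_c$ to the current reading of $\mathsf{clock}_c$, and returns. Timestamps: for a \textsc{get} operation $o$, $\mathrm{ts}(o)$ is the value $ts=\max\{\mathsf{dt}_c,\mathsf{cgst}_c\}$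 computed when $o$ is issued; for a \textsc{put} operation $o$, $\mathrm{ts}(o)$ is the clock value $cl$ sent in its request. *)

theory Defs
  imports Main "HOL.Real"
begin

text \<open>An operation executed by a client, together with the real times at which
  it was issued, its request was sent, and it returned.
  GetOp k rs ti ts tr : a get on key k; rs are the cgst values carried by the
    replies of the quorum Q.
  PutOp k v rs ti ts tr : a put of (k,v); rs as above; the request carrying
    cl = clock ts is sent at real time ts.\<close>

datatype ('k, 'v) opn =
    GetOp 'k "real list" real real real
  | PutOp 'k 'v "real list" real real real

fun replies :: "('k,'v) opn \<Rightarrow> real list" where
  "replies (GetOp _ rs _ _ _) = rs"
| "replies (PutOp _ _ rs _ _ _) = rs"

fun t_issue :: "('k,'v) opn \<Rightarrow> real" where
  "t_issue (GetOp _ _ a _ _) = a"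
| "t_issue (PutOp _ _ _ a _ _) = a"

fun t_send :: "('k,'v) opn \<Rightarrow> real" where
  "t_send (GetOp _ _ _ s _) = s"
| "t_send (PutOp _ _ _ _ s _) = s"

fun t_return :: "('k,'v) opn \<Rightarrow> real" where
  "t_return (GetOp _ _ _ _ e) = e"
| "t_return (PutOp _ _ _ _ _ e) = e"

fun is_put :: "('k,'v) opn \<Rightarrow> bool" where
  "is_put (GetOp _ _ _ _ _) = False"
| "is_put (PutOp _ _ _ _ _ _) = True"

fun is_get :: "('k,'v) opn \<Rightarrow> bool" where
  "is_get (GetOp _ _ _ _ _) = True"
| "is_get (PutOp _ _ _ _ _ _) = False"

text \<open>Client state (dt, cgst) and its update when an operation completes.\<close>
fun client_step :: "(real \<Rightarrow> real) \<Rightarrow> real \<times> real \<Rightarrow> ('k,'v) opn \<Rightarrow> real \<times> real" where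
  "client_step clock (dt, cg) (GetOp _ rs _ _ _) = (dt, max cg (Min (set rs)))"
| "client_step clock (dt, cg) (PutOp _ _ rs _ _ e) = (clock e, max cg (Min (set rs)))"

definition state_before :: "(real \<Rightarrow> real) \<Rightarrow> ('k,'v) opn list \<Rightarrow> nat \<Rightarrow> real \<times> real" where
  "state_before clock ops i = foldl (client_step clock) (0, 0) (take i ops)"

definition op_ts :: "(real \<Rightarrow> real) \<Rightarrow> ('k,'v) opn list \<Rightarrow> nat \<Rightarrow> real" where
  "op_ts clock ops i =
     (if is_put (ops ! i) then clock (t_send (ops ! i))
      else max (fst (state_before clock ops i)) (snd (state_before clock ops i)))"

definition correct_run :: "nat \<Rightarrow> (real \<Rightarrow> real) \<Rightarrow> ('k,'v) opn list \<Rightarrow> bool" where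
  "correct_run f clock ops \<longleftrightarrow>
     strict_mono clock \<and> (\<forall>t. clock t > 0) \<and>
     (\<forall>i < length ops.
        length (replies (ops ! i)) = 2 * f + 1 \<and>
        t_issue (ops ! i) \<le> t_send (ops ! i) \<and> t_send (ops ! i) \<le> t_return (ops ! i) \<and>
        (is_put (ops ! i) \<longrightarrow> clock (t_send (ops ! i)) > snd (state_before clock ops i))) \<and>
     (\<forall>i. Suc i < length ops \<longrightarrow> t_return (ops ! i) \<le> t_issue (ops ! Suc i))"

end

theory Submission
  imports Defs
begin

lemma sb_Suc:
  assumes "i < length ops"
  shows "state_before clock ops (Suc i) = client_step clock (state_before clock ops i) (ops ! i)"
  using assms by (simp add: state_before_def take_Suc_conv_app_nth)

lemma ret_mono:
  assumes "correct_run f clock ops" "w \<le> j" "j < length ops"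
  shows "t_return (ops ! w) \<le> t_return (ops ! j)"
  using assms(2,3)
proof (induction j rule: dec_induct)
  case base then show ?case by simp
next
  case (step j)
  have "t_return (ops ! j) \<le> t_issue (ops ! Suc j)" using assms(1) step unfolding correct_run_def by blast
  moreover have "t_issue (ops ! Suc j) \<le> t_send (ops ! Suc j) \<and> t_send (ops ! Suc j) \<le> t_return (ops ! Suc j)"
    using assms(1) step unfolding correct_run_def by blast
  ultimately show ?case using step by linarith
qed

lemma dt_bound:
  assumes "correct_run f clock ops" "is_put (ops ! w)" "Suc w \<le> i" "i \<le> length ops"
  shows "fst (state_before clock ops i) \<ge> clock (t_return (ops ! w))"
  using assms(3,4)
proof (induction i rule: dec_induct)
  case base
  have "w < length ops" using base by simp
  then show ?case using assms(2)
    by (cases "state_before clock ops w"; cases "ops ! w") (simp_all add: sb_Suc)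
next
  case (step i)
  have il: "i < length ops" using step by simp
  have sm: "strict_mono clock" using assms(1) unfolding correct_run_def by blast
  have rm: "t_return (ops ! w) \<le> t_return (ops ! i)" using ret_mono[OF assms(1), of w i] step il by simp
  hence "clock (t_return (ops ! w)) \<le> clock (t_return (ops ! i))" using sm by (simp add: strict_mono_less_eq)
  then show ?case using step.IH il rm
    by (cases "state_before clock ops i"; cases "ops ! i") (simp_all add: sb_Suc)
qed

theorem lemma5:
  fixes f :: nat and clock :: "real \<Rightarrow> real" and ops :: "('k, 'v) opn list"
    and w r :: nat
  assumes "correct_run f clock ops"
    and "w < r" and "r < length ops"
    and "is_put (ops ! w)" and "is_get (ops ! r)"
  shows "op_ts clock ops r \<ge> op_ts clock ops w"
proof -
  have sm: "strict_mono clock" using assms(1) unfolding correct_run_def by blast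
  have "t_send (ops ! w) \<le> t_return (ops ! w)" using assms(1-3) unfolding correct_run_def by auto
  hence "clock (t_send (ops ! w)) \<le> clock (t_return (ops ! w))" using sm by (simp add: strict_mono_less_eq)
  moreover have "fst (state_before clock ops r) \<ge> clock (t_return (ops ! w))"
    using dt_bound[OF assms(1,4), of r] assms(2,3) by simp
  moreover have "\<not> is_put (ops ! r)" using assms(5) by (cases "ops ! r") auto
  ultimately show ?thesis using assms(4) unfolding op_ts_def by simp
qed

end
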